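(* Let $n\ge 2$ and let $\mathcal{A}$ be a connected cochain DG algebra whose underlying graded algebra $\mathcal{A}^{\#}$ is the $k$-algebra generated by degree-one elements $x_1,\dots,x_n$ subject to the relations $x_ix_j=-x_jx_i$ for all $1\le i<j\le n$. Then there is a matrix $M=(m_{ij})_{n\times n}\in M_n(k)$ such that $$\partial_{\mathcal{A}}(x_i)=\sum_{j=1}^n m_{ij}x_j^2\quad\text{for all } i=1,\dots,n,$$ i.e. $(\partial_{\mathcal{A}}(x_1),\dots,\partial_{\mathcal{A}}(x_n))^T=M\,(x_1^2,\dots,x_n^2)^T$; in particular the differential $\partial_{\mathcal{A}}$ is determined by $M$.
   Context: $k$ is an algebraically closed field of characteristic zero. A connected cochain DG algebra is a graded $k$-algebra $\mathcal{A}=\bigoplus_{i\ge 0}\mathcal{A}^i$ with $\mathcal{A}^0=k$, together with a $k$-linear map $\partial_{\mathcal{A}}$ of degree $+1$ with $\partial_{\mathcal{A}}^2=0$ satisfying the Leibniz rule $\partial_{\mathcal{A}}(ab)=\partial_{\mathcal{A}}(a)b+(-1)^{|a|}a\partial_{\mathcal{A}}(b)$ for homogeneous $a,b$. $\mathcal{A}^{\#}$ denotes the underlying graded algebra. Note that no relation is imposed on the squares $x_i^2$. *)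

theory Defs
  imports "HOL-Computational_Algebra.Polynomial"
begin

text \<open>Noncommutative polynomials: coefficient functions on words (lists of generator indices).\<close>
type_synonym 'k ncpoly = "nat list \<Rightarrow> 'k"

definition nc_add :: "'k::comm_ring_1 ncpoly \<Rightarrow> 'k ncpoly \<Rightarrow> 'k ncpoly" where
  "nc_add p q = (\<lambda>w. p w + q w)"

definition nc_mult :: "'k::comm_ring_1 ncpoly \<Rightarrow> 'k ncpoly \<Rightarrow> 'k ncpoly" where
  "nc_mult p q = (\<lambda>w. \<Sum>i\<le>length w. p (take i w) * q (drop i w))"

definition nc_var :: "nat \<Rightarrow> 'k::comm_ring_1 ncpoly" where
  "nc_var i = (\<lambda>w. if w = [i] then 1 else 0)"

text \<open>Elements of the free algebra k<x_0,...,x_{n-1}>: finite support, words in the first n letters.\<close>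
definition nc_poly :: "nat \<Rightarrow> 'k::comm_ring_1 ncpoly \<Rightarrow> bool" where
  "nc_poly n p \<longleftrightarrow> finite {w. p w \<noteq> 0} \<and> (\<forall>w. p w \<noteq> 0 \<longrightarrow> set w \<subseteq> {..<n})"

inductive_set nc_ideal :: "nat \<Rightarrow> 'k::comm_ring_1 ncpoly set \<Rightarrow> 'k ncpoly set"
  for n :: nat and R :: "'k ncpoly set" where
  zero: "(\<lambda>_. 0) \<in> nc_ideal n R"
| add: "p \<in> nc_ideal n R \<Longrightarrow> q \<in> nc_ideal n R \<Longrightarrow> nc_add p q \<in> nc_ideal n R"
| gen: "r \<in> R \<Longrightarrow> nc_poly n a \<Longrightarrow> nc_poly n b \<Longrightarrow> nc_mult (nc_mult a r) b \<in> nc_ideal n R"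

text \<open>The relations x_i x_j + x_j x_i for i < j (no relation on squares).\<close>
definition anticomm_rels :: "nat \<Rightarrow> 'k::comm_ring_1 ncpoly set" where
  "anticomm_rels n = {nc_add (nc_mult (nc_var i) (nc_var j)) (nc_mult (nc_var j) (nc_var i)) | i j. i < j \<and> j < n}"

text \<open>A k-algebra: a ring with a central ring homomorphism from k (scalar action c.a = of_k c * a).\<close>
definition k_algebra :: "('k::field \<Rightarrow> 'a::ring_1) \<Rightarrow> bool" where
  "k_algebra of_k \<longleftrightarrow> of_k 1 = 1 \<and> (\<forall>a b. of_k (a + b) = of_k a + of_k b)
     \<and> (\<forall>a b. of_k (a * b) = of_k a * of_k b) \<and> (\<forall>c a. of_k c * a = a * of_k c)"

definition nc_eval :: "('k::comm_ring_1 \<Rightarrow> 'a::ring_1) \<Rightarrow> (nat \<Rightarrow> 'a) \<Rightarrow> 'k ncpoly \<Rightarrow> 'a" where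
  "nc_eval of_k x p = (\<Sum>w\<in>{w. p w \<noteq> 0}. of_k (p w) * prod_list (map x w))"

text \<open>The algebra is generated by x_0..x_{n-1} subject exactly to the relations
  x_i x_j = - x_j x_i (i<j): evaluation from the free algebra is surjective with kernel
  the two-sided ideal generated by the relations.\<close>
definition presents_anticomm :: "nat \<Rightarrow> ('k::field \<Rightarrow> 'a::ring_1) \<Rightarrow> (nat \<Rightarrow> 'a) \<Rightarrow> bool" where
  "presents_anticomm n of_k x \<longleftrightarrow>
     (\<forall>a. \<exists>p. nc_poly n p \<and> nc_eval of_k x p = a)
   \<and> (\<forall>p. nc_poly n p \<longrightarrow> (nc_eval of_k x p = 0 \<longleftrightarrow> p \<in> nc_ideal n (anticomm_rels n)))"

definition connected_cochain_dga ::
  "('k::field \<Rightarrow> 'a::ring_1) \<Rightarrow> (nat \<Rightarrow> 'a set) \<Rightarrow> ('a \<Rightarrow> 'a) \<Rightarrow> bool" where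
  "connected_cochain_dga of_k Agr d \<longleftrightarrow>
     \<comment> \<open>each A^i is a k-subspace\<close>
     (\<forall>i. 0 \<in> Agr i \<and> (\<forall>a\<in>Agr i. \<forall>b\<in>Agr i. a + b \<in> Agr i) \<and> (\<forall>c. \<forall>a\<in>Agr i. of_k c * a \<in> Agr i))
     \<comment> \<open>A = direct sum of the A^i, i >= 0\<close>
   \<and> (\<forall>a. \<exists>N f. (\<forall>i<N. f i \<in> Agr i) \<and> a = (\<Sum>i<N. f i))
   \<and> (\<forall>N f. (\<forall>i<N. f i \<in> Agr i) \<and> (\<Sum>i<N. f i) = 0 \<longrightarrow> (\<forall>i<N. f i = 0))
     \<comment> \<open>graded multiplication\<close>
   \<and> (\<forall>i j a b. a \<in> Agr i \<longrightarrow> b \<in> Agr j \<longrightarrow> a * b \<in> Agr (i + j))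
     \<comment> \<open>connected: A^0 = k\<close>
   \<and> inj of_k \<and> Agr 0 = range of_k
     \<comment> \<open>differential: k-linear, degree +1, square zero, Leibniz rule\<close>
   \<and> (\<forall>a b. d (a + b) = d a + d b) \<and> (\<forall>c a. d (of_k c * a) = of_k c * d a)
   \<and> (\<forall>i a. a \<in> Agr i \<longrightarrow> d a \<in> Agr (i + 1))
   \<and> (\<forall>a. d (d a) = 0)
   \<and> (\<forall>i a b. a \<in> Agr i \<longrightarrow> d (a * b) = d a * b + (- 1) ^ i * a * d b)"

end

theory Submission
  imports Defs
begin

definition one_nc :: "'k::comm_ring_1 ncpoly" where "one_nc = (\<lambda>w. if w = [] then 1 else 0)"
lemma nc_mult_one_left: "nc_mult one_nc p = p"
proof
  fix w :: "nat list"
  have "(\<Sum>i\<le>length w. one_nc (take i w) * p (drop i w)) = (\<Sum>i\<le>length w. if i = 0 then p w else 0)"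
    by (rule sum.cong) (auto simp: one_nc_def)
  then show "nc_mult one_nc p w = p w" by (simp add: nc_mult_def)
qed
lemma nc_mult_one_right: "nc_mult p one_nc = p"
proof
  fix w :: "nat list"
  have "(\<Sum>i\<le>length w. p (take i w) * one_nc (drop i w)) = (\<Sum>i\<le>length w. if i = length w then p w else 0)"
    by (rule sum.cong) (auto simp: one_nc_def)
  then show "nc_mult p one_nc w = p w" by (simp add: nc_mult_def)
qed

lemma nc_var_mult: "nc_mult (nc_var a) (nc_var b) = (\<lambda>w. if w = [a,b] then 1 else (0::'k::comm_ring_1))"
proof
  fix w :: "nat list"
  have h1: "(\<Sum>i\<le>length w. nc_var a (take i w) * (nc_var b (drop i w) :: 'k)) = (\<Sum>i\<le>length w. if i = 1 \<and> w = [a,b] then 1 else 0)"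
  proof (rule sum.cong)
    fix i assume i: "i \<in> {..length w}"
    show "nc_var a (take i w) * (nc_var b (drop i w) :: 'k) = (if i = 1 \<and> w = [a,b] then 1 else 0)"
    proof (cases "take i w = [a] \<and> drop i w = [b]")
      case True
      have "w = take i w @ drop i w" by simp
      then have w: "w = [a,b]" using True by simp
      have "length (take i w) = 1" using True by simp
      then have "min i 2 = 1" using w by simp
      then have "i = 1" by (simp add: min_def split: if_splits)
      then show ?thesis using True w by (simp add: nc_var_def)
    next
      case False
      have "\<not> (i = 1 \<and> w = [a,b])"
      proof
        assume "i = 1 \<and> w = [a,b]" then show False using False by simp
      qed
      moreover have "nc_var a (take i w) * (nc_var b (drop i w) :: 'k) = 0"
        using False unfolding nc_var_def by simp
      ultimately show ?thesis by simp
    qed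
  qed simp
  have h2: "(\<Sum>i\<le>length w. if i = 1 \<and> w = [a,b] then 1 else 0) = (if w = [a,b] then 1 else (0::'k))"
  proof (cases "w = [a,b]")
    case True then show ?thesis by (simp add: numeral_2_eq_2 atMost_Suc)
  next
    case False then show ?thesis by simp
  qed
  have h3: "nc_mult (nc_var a) (nc_var b) w = (\<Sum>i\<le>length w. nc_var a (take i w) * (nc_var b (drop i w) :: 'k))"
    by (simp only: nc_mult_def)
  show "nc_mult (nc_var a) (nc_var b) w = (if w = [a,b] then 1 else (0::'k))"
    by (rule trans[OF h3 trans[OF h1 h2]])
qed
lemma nc_mult3:
  assumes "r [] = 0" "\<And>u. r [u] = 0" "\<And>u v c. r [u,v,c] = 0"
  shows "nc_mult (nc_mult a r) b [p,q,c] = a [] * r [p,q] * b [c] + a [p] * r [q,c] * b []"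
  using assms by (simp add: nc_mult_def atMost_Suc numeral_3_eq_3 algebra_simps)

definition phi :: "nat \<Rightarrow> nat \<Rightarrow> 'k::comm_ring_1 ncpoly \<Rightarrow> 'k" where
  "phi s t p = p [s,s,t] - p [s,t,s] + p [t,s,s]"

lemma phi_ideal: "q \<in> nc_ideal n (anticomm_rels n) \<Longrightarrow> phi s t q = 0"
proof (induction rule: nc_ideal.induct)
  case zero then show ?case by (simp add: phi_def)
next
  case (add p q)
  have "phi s t (nc_add p q) = phi s t p + phi s t q" by (simp add: phi_def nc_add_def algebra_simps)
  then show ?case using add.IH by simp
next
  case (gen r a b)
  obtain i j where ij: "i < j" "j < n" and r: "r = nc_add (nc_mult (nc_var i) (nc_var j)) (nc_mult (nc_var j) (nc_var i))"
    using gen(1) unfolding anticomm_rels_def by blast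
  have rv: "r = (\<lambda>w. (if w = [i,j] then 1 else 0) + (if w = [j,i] then 1 else 0))"
    unfolding r nc_add_def nc_var_mult by (rule refl)
  have r0: "r [] = 0" "\<And>u. r [u] = 0" "\<And>u v c. r [u,v,c] = 0" unfolding rv by simp_all
  have "[s,s] \<noteq> [i,j]" "[s,s] \<noteq> [j,i]" using ij by auto
  then have r1: "r [s,s] = 0" unfolding rv by simp
  have e1: "([t,s] = [i,j]) = ([s,t] = [j,i])" "([t,s] = [j,i]) = ([s,t] = [i,j])" by auto
  have r2: "r [t,s] = r [s,t]" unfolding rv e1 by (rule add.commute)
  show ?case unfolding phi_def nc_mult3[OF r0] r1 r2 by (simp add: algebra_simps)
qed

definition mono_nc :: "nat list \<Rightarrow> 'k::comm_ring_1 ncpoly" where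
  "mono_nc u = (\<lambda>w. if w = u then 1 else 0)"

lemma phi_comb: "phi s t (\<lambda>w. c * p w + e * q w) = c * phi s t p + e * phi s t q"
  by (simp add: phi_def algebra_simps)

lemma nc_poly_comb: "nc_poly n p \<Longrightarrow> nc_poly n q \<Longrightarrow> nc_poly n (\<lambda>w. c * p w + e * q w)"
proof -
  assume p: "nc_poly n p" and q: "nc_poly n q"
  have fp: "finite {w. p w \<noteq> 0}" and sp: "\<And>w. p w \<noteq> 0 \<Longrightarrow> set w \<subseteq> {..<n}"
    using p unfolding nc_poly_def by auto
  have fq: "finite {w. q w \<noteq> 0}" and sq: "\<And>w. q w \<noteq> 0 \<Longrightarrow> set w \<subseteq> {..<n}"
    using q unfolding nc_poly_def by auto
  have nz: "c * p w + e * q w \<noteq> 0 \<Longrightarrow> p w \<noteq> 0 \<or> q w \<noteq> 0" for w by auto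
  have sub: "{w. c * p w + e * q w \<noteq> 0} \<subseteq> {w. p w \<noteq> 0} \<union> {w. q w \<noteq> 0}" using nz by blast
  have "finite {w. c * p w + e * q w \<noteq> 0}"
    by (rule finite_subset[OF sub]) (simp add: fp fq)
  moreover have "\<forall>w. c * p w + e * q w \<noteq> 0 \<longrightarrow> set w \<subseteq> {..<n}"
    using nz sp sq by blast
  ultimately show ?thesis unfolding nc_poly_def by blast
qed

lemma nc_poly_mono: "set u \<subseteq> {..<n} \<Longrightarrow> nc_poly n (mono_nc u)"
  by (simp add: nc_poly_def mono_nc_def)

locale ncp =
  fixes of_k :: "'k::field \<Rightarrow> 'a::ring_1" and x :: "nat \<Rightarrow> 'a" and n :: nat
  assumes kalg: "k_algebra of_k" and pres: "presents_anticomm n of_k x"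
begin

lemma ofk_add: "of_k (a + b) = of_k a + of_k b" using kalg unfolding k_algebra_def by blast
lemma ofk_mult: "of_k (a * b) = of_k a * of_k b" using kalg unfolding k_algebra_def by blast
lemma ofk_1: "of_k 1 = 1" using kalg unfolding k_algebra_def by blast
lemma ofk_comm: "of_k c * a = a * of_k c" using kalg unfolding k_algebra_def by blast
lemma ofk_0: "of_k 0 = 0"
proof -
  have "of_k (0 + 0) = of_k 0 + of_k 0" by (rule ofk_add)
  then show ?thesis by simp
qed
lemma ofk_minus: "of_k (- a) = - of_k a"
proof -
  have "of_k (a + - a) = of_k a + of_k (- a)" by (rule ofk_add)
  then have "of_k a + of_k (- a) = 0" by (simp add: ofk_0)
  then show ?thesis by (rule minus_unique[symmetric])
qed

lemma eval_superset:
  assumes "finite S" "{w. p w \<noteq> 0} \<subseteq> S"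
  shows "nc_eval of_k x p = (\<Sum>w\<in>S. of_k (p w) * prod_list (map x w))"
  unfolding nc_eval_def
  by (rule sum.mono_neutral_left) (use assms in \<open>auto simp: ofk_0\<close>)

lemma eval_comb:
  assumes p: "nc_poly n p" and q: "nc_poly n q"
  shows "nc_eval of_k x (\<lambda>w. c * p w + e * q w) = of_k c * nc_eval of_k x p + of_k e * nc_eval of_k x q"
proof -
  define S where "S = {w. p w \<noteq> 0} \<union> {w. q w \<noteq> 0}"
  have fS: "finite S" using p q by (simp add: S_def nc_poly_def)
  have "nc_eval of_k x (\<lambda>w. c * p w + e * q w) = (\<Sum>w\<in>S. of_k (c * p w + e * q w) * prod_list (map x w))"
    by (rule eval_superset[OF fS]) (auto simp: S_def)
  also have "\<dots> = of_k c * (\<Sum>w\<in>S. of_k (p w) * prod_list (map x w)) + of_k e * (\<Sum>w\<in>S. of_k (q w) * prod_list (map x w))"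
    by (simp add: ofk_add ofk_mult sum_distrib_left sum.distrib distrib_right mult.assoc)
  also have "\<dots> = of_k c * nc_eval of_k x p + of_k e * nc_eval of_k x q"
    using eval_superset[OF fS, of p] eval_superset[OF fS, of q] by (auto simp: S_def)
  finally show ?thesis .
qed

lemma eval_mono: "nc_eval of_k x (mono_nc u) = prod_list (map x u)"
proof -
  have "nc_eval of_k x (mono_nc u) = (\<Sum>w\<in>{u}. of_k (mono_nc u w) * prod_list (map x w))"
    by (rule eval_superset) (auto simp: mono_nc_def)
  then show ?thesis by (simp add: mono_nc_def ofk_1)
qed

definition psi :: "nat \<Rightarrow> nat \<Rightarrow> 'a \<Rightarrow> 'k" where
  "psi s t a = phi s t (SOME p. nc_poly n p \<and> nc_eval of_k x p = a)"

lemma psi_eval: assumes p: "nc_poly n p" shows "psi s t (nc_eval of_k x p) = phi s t p"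
proof -
  define q where "q = (SOME q. nc_poly n q \<and> nc_eval of_k x q = nc_eval of_k x p)"
  have "\<exists>q. nc_poly n q \<and> nc_eval of_k x q = nc_eval of_k x p" using p by blast
  then have q: "nc_poly n q" "nc_eval of_k x q = nc_eval of_k x p"
    unfolding q_def by (metis (mono_tags, lifting) someI_ex)+
  have pd: "nc_poly n (\<lambda>w. 1 * q w + (- 1) * p w)" by (rule nc_poly_comb[OF q(1) p])
  have "nc_eval of_k x (\<lambda>w. 1 * q w + (- 1) * p w) = 0"
    unfolding eval_comb[OF q(1) p] using q(2) by (simp add: ofk_1 ofk_minus)
  then have "(\<lambda>w. 1 * q w + (- 1) * p w) \<in> nc_ideal n (anticomm_rels n)"
    using pres pd unfolding presents_anticomm_def by blast
  then have "phi s t (\<lambda>w. 1 * q w + (- 1) * p w) = 0" by (rule phi_ideal)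
  then have "phi s t q = phi s t p" unfolding phi_comb by simp
  then show ?thesis by (simp add: psi_def q_def)
qed

lemma surj_eval: "\<exists>p. nc_poly n p \<and> nc_eval of_k x p = a"
  using pres unfolding presents_anticomm_def by blast

lemma psi_comb: "psi s t (of_k c * a + of_k e * b) = c * psi s t a + e * psi s t b"
proof -
  obtain p where p: "nc_poly n p" "nc_eval of_k x p = a" using surj_eval by blast
  obtain q where q: "nc_poly n q" "nc_eval of_k x q = b" using surj_eval by blast
  have "of_k c * a + of_k e * b = nc_eval of_k x (\<lambda>w. c * p w + e * q w)"
    using eval_comb[OF p(1) q(1)] p q by simp
  then show ?thesis using psi_eval[OF nc_poly_comb[OF p(1) q(1)]] psi_eval[OF p(1)] psi_eval[OF q(1)] p q
    by (simp add: phi_comb)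
qed

lemma psi_add: "psi s t (a + b) = psi s t a + psi s t b"
  using psi_comb[of s t 1 a 1 b] by (simp add: ofk_1)

lemma psi_scale: "psi s t (of_k c * a) = c * psi s t a"
  using psi_comb[of s t c a 0 0] by (simp add: ofk_0)

lemma psi_zero: "psi s t 0 = 0"
  using psi_scale[of s t 0 0] by (simp add: ofk_0)

lemma psi_diff: "psi s t (a - b) = psi s t a - psi s t b"
  using psi_add[of s t "a - b" b] by simp

lemma psi_sum: "psi s t (\<Sum>i\<in>I. f i) = (\<Sum>i\<in>I. psi s t (f i))"
proof (cases "finite I")
  case True then show ?thesis
    by (induction rule: finite_induct) (auto simp: psi_add psi_zero)
next
  case False then show ?thesis by (simp add: psi_zero)
qed

lemma psi_mono3:
  assumes "a < n" "b < n" "c < n"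
  shows "psi s t (x a * x b * x c) = phi s t (mono_nc [a,b,c])"
proof -
  have "x a * x b * x c = nc_eval of_k x (mono_nc [a,b,c])" by (simp add: eval_mono mult.assoc)
  then show ?thesis using psi_eval[OF nc_poly_mono, of "[a,b,c]"] assms by simp
qed

lemma anticomm:
  assumes "a < n" "b < n" "a < b"
  shows "x a * x b + x b * x a = 0"
proof -
  define r :: "'k ncpoly" where "r = nc_add (nc_mult (nc_var a) (nc_var b)) (nc_mult (nc_var b) (nc_var a))"
  have "r \<in> anticomm_rels n" using assms unfolding r_def anticomm_rels_def by blast
  moreover have "nc_poly n one_nc" by (simp add: nc_poly_def one_nc_def)
  ultimately have "nc_mult (nc_mult one_nc r) one_nc \<in> nc_ideal n (anticomm_rels n)"
    by (blast intro: nc_ideal.gen)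
  then have ri: "r \<in> nc_ideal n (anticomm_rels n)" by (simp add: nc_mult_one_left nc_mult_one_right)
  have r: "r = (\<lambda>w. 1 * mono_nc [a,b] w + 1 * mono_nc [b,a] w)"
    unfolding r_def nc_add_def nc_var_mult mono_nc_def by simp
  have pa: "nc_poly n (mono_nc [a,b])" "nc_poly n (mono_nc [b,a])" using assms by (auto intro!: nc_poly_mono)
  have "nc_poly n r" unfolding r by (rule nc_poly_comb[OF pa])
  then have "nc_eval of_k x r = 0" using ri pres unfolding presents_anticomm_def by blast
  then show ?thesis unfolding r eval_comb[OF pa] by (simp add: eval_mono ofk_1)
qed

lemma anticomm': "a < n \<Longrightarrow> b < n \<Longrightarrow> a \<noteq> b \<Longrightarrow> x a * x b + x b * x a = 0"
  using anticomm[of a b] anticomm[of b a] by (cases "a < b") (auto simp: add.commute)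

end

lemma E2:
  fixes Q :: "nat \<Rightarrow> nat \<Rightarrow> 'k::comm_ring_1"
  assumes "i \<noteq> s"
  shows "(\<Sum>a<n. \<Sum>b<n. Q a b * phi s t (mono_nc [a,b,i])) = (\<Sum>a<n. \<Sum>b<n. Q a b * phi s t (mono_nc [i,a,b]))"
proof -
  have "phi s t (mono_nc [a,b,i]) = (phi s t (mono_nc [i,a,b]) :: 'k)" for a b
    using assms by (simp add: phi_def mono_nc_def)
  then show ?thesis by simp
qed

lemma dsum:
  fixes c :: "'k::comm_ring_1" and s t n :: nat
  assumes "s < n" "t < n"
  shows "(\<Sum>a<n. \<Sum>b<n. if a = t then (if b = s then c else 0) else 0) = c"
proof -
  have "(\<Sum>b<n. if a = t then (if b = s then c else 0) else 0) = (if a = t then c else 0)" for a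
    using assms by (cases "a = t") (simp_all add: sum.delta sum.delta')
  then show ?thesis using assms by simp
qed

lemma E1:
  fixes Q :: "nat \<Rightarrow> nat \<Rightarrow> 'k::comm_ring_1"
  assumes "s \<noteq> t" "s < n" "t < n"
  shows "(\<Sum>a<n. \<Sum>b<n. Q a b * phi s t (mono_nc [a,b,s])) - (\<Sum>a<n. \<Sum>b<n. Q a b * phi s t (mono_nc [s,a,b]))
     = 2 * Q t s - 2 * Q s t"
proof -
  have pw: "Q a b * phi s t (mono_nc [a,b,s]) - Q a b * phi s t (mono_nc [s,a,b])
     = (if a = t then (if b = s then 2 * Q t s else 0) else 0) - (if a = s then (if b = t then 2 * Q s t else 0) else 0)" for a b
    using assms(1) by (auto simp: phi_def mono_nc_def)
  have "(\<Sum>a<n. \<Sum>b<n. Q a b * phi s t (mono_nc [a,b,s])) - (\<Sum>a<n. \<Sum>b<n. Q a b * phi s t (mono_nc [s,a,b]))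
     = (\<Sum>a<n. \<Sum>b<n. Q a b * phi s t (mono_nc [a,b,s]) - Q a b * phi s t (mono_nc [s,a,b]))"
    by (simp add: sum_subtractf)
  also have "\<dots> = (\<Sum>a<n. \<Sum>b<n. (if a = t then (if b = s then 2 * Q t s else 0) else 0) - (if a = s then (if b = t then 2 * Q s t else 0) else 0))"
    by (simp only: pw)
  also have "\<dots> = (\<Sum>a<n. \<Sum>b<n. (if a = t then (if b = s then 2 * Q t s else 0) else 0)) - (\<Sum>a<n. \<Sum>b<n. (if a = s then (if b = t then 2 * Q s t else 0) else 0))"
    by (simp only: sum_subtractf)
  also have "\<dots> = 2 * Q t s - 2 * Q s t"
    by (simp only: dsum[OF assms(2,3)] dsum[OF assms(3,2)])
  finally show ?thesis .
qed

context ncp begin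

lemma half:
  fixes u v :: 'a
  assumes two: "(2::'k) \<noteq> 0" and e: "u + u = v + v"
  shows "u = v"
proof -
  have hh: "(1::'k)/2 + 1/2 = 1"
    by (simp only: add_divide_distrib[symmetric] one_add_one divide_self[OF two])
  have h: "of_k (1/2) * (w + w) = w" for w
  proof -
    have "of_k (1/2) * (w + w) = (of_k (1/2) + of_k (1/2)) * w" by (simp only: distrib_left distrib_right)
    also have "\<dots> = of_k (1/2 + 1/2) * w" by (simp only: ofk_add)
    also have "\<dots> = w" by (simp only: hh ofk_1 mult_1_left)
    finally show ?thesis .
  qed
  have "u = of_k (1/2) * (u + u)" by (rule h[symmetric])
  also have "\<dots> = of_k (1/2) * (v + v)" by (simp only: e)
  also have "\<dots> = v" by (rule h)
  finally show ?thesis .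
qed

lemma offdiag:
  assumes two: "(2::'k) \<noteq> 0"
    and sym: "\<And>a b. a < n \<Longrightarrow> b < n \<Longrightarrow> a \<noteq> b \<Longrightarrow> Q a b = Q b a"
  shows "(\<Sum>a<n. \<Sum>b<n. of_k (Q a b) * (x a * x b)) = (\<Sum>a<n. of_k (Q a a) * (x a * x a))"
proof -
  define F where "F a b = of_k (Q a b) * (x a * x b)" for a b
  have pw: "F a b + F b a = (if b = a then F a a + F a a else 0)" if "a < n" "b < n" for a b
  proof (cases "a = b")
    case True then show ?thesis by simp
  next
    case False
    have "F a b + F b a = of_k (Q a b) * (x a * x b + x b * x a)"
      using sym[OF that False] by (simp add: F_def distrib_left)
    also have "\<dots> = 0" using anticomm'[OF that False] by simp
    finally show ?thesis using False by simp
  qed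
  have "(\<Sum>a<n. \<Sum>b<n. F a b) + (\<Sum>a<n. \<Sum>b<n. F a b) = (\<Sum>a<n. \<Sum>b<n. F a b) + (\<Sum>a<n. \<Sum>b<n. F b a)"
    using sum.swap[of "\<lambda>a b. F b a" "{..<n}" "{..<n}"] by simp
  also have "\<dots> = (\<Sum>a<n. \<Sum>b<n. F a b + F b a)" by (simp add: sum.distrib)
  also have "\<dots> = (\<Sum>a<n. \<Sum>b<n. if b = a then F a a + F a a else 0)"
    by (rule sum.cong[OF refl], rule sum.cong[OF refl]) (simp add: pw)
  also have "\<dots> = (\<Sum>a<n. F a a) + (\<Sum>a<n. F a a)" by (simp add: sum.distrib)
  finally have "(\<Sum>a<n. \<Sum>b<n. F a b) = (\<Sum>a<n. F a a)" by (rule half[OF two])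
  then show ?thesis by (simp add: F_def)
qed

lemma psi_right:
  assumes "c < n"
  shows "psi s t ((\<Sum>a<n. \<Sum>b<n. of_k (Q a b) * (x a * x b)) * x c) = (\<Sum>a<n. \<Sum>b<n. Q a b * phi s t (mono_nc [a,b,c]))"
proof -
  have "(\<Sum>a<n. \<Sum>b<n. of_k (Q a b) * (x a * x b)) * x c = (\<Sum>a<n. \<Sum>b<n. of_k (Q a b) * (x a * x b * x c))"
    by (simp only: sum_distrib_right mult.assoc)
  then have "psi s t ((\<Sum>a<n. \<Sum>b<n. of_k (Q a b) * (x a * x b)) * x c) = (\<Sum>a<n. \<Sum>b<n. Q a b * psi s t (x a * x b * x c))"
    by (simp only: psi_sum psi_scale)
  also have "\<dots> = (\<Sum>a<n. \<Sum>b<n. Q a b * phi s t (mono_nc [a,b,c]))"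
    by (rule sum.cong[OF refl], rule sum.cong[OF refl]) (simp add: psi_mono3 assms)
  finally show ?thesis .
qed

lemma psi_left:
  assumes "c < n"
  shows "psi s t (x c * (\<Sum>a<n. \<Sum>b<n. of_k (Q a b) * (x a * x b))) = (\<Sum>a<n. \<Sum>b<n. Q a b * phi s t (mono_nc [c,a,b]))"
proof -
  have cm: "x c * (of_k q * (x a * x b)) = of_k q * (x c * x a * x b)" for q a b
  proof -
    have "x c * (of_k q * (x a * x b)) = (x c * of_k q) * (x a * x b)" by (rule mult.assoc[symmetric])
    also have "x c * of_k q = of_k q * x c" by (rule ofk_comm[symmetric])
    finally show ?thesis by (simp only: mult.assoc)
  qed
  have "x c * (\<Sum>a<n. \<Sum>b<n. of_k (Q a b) * (x a * x b)) = (\<Sum>a<n. \<Sum>b<n. of_k (Q a b) * (x c * x a * x b))"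
    by (simp only: sum_distrib_left cm)
  then have "psi s t (x c * (\<Sum>a<n. \<Sum>b<n. of_k (Q a b) * (x a * x b))) = (\<Sum>a<n. \<Sum>b<n. Q a b * psi s t (x c * x a * x b))"
    by (simp only: psi_sum psi_scale)
  also have "\<dots> = (\<Sum>a<n. \<Sum>b<n. Q a b * phi s t (mono_nc [c,a,b]))"
    by (rule sum.cong[OF refl], rule sum.cong[OF refl]) (simp add: psi_mono3 assms)
  finally show ?thesis .
qed

end

lemma dgaD:
  fixes of_k :: "'k::field \<Rightarrow> 'a::ring_1"
  assumes "connected_cochain_dga of_k Agr d"
  shows dga_zero: "0 \<in> Agr m"
    and dga_add: "a \<in> Agr m \<Longrightarrow> b \<in> Agr m \<Longrightarrow> a + b \<in> Agr m"
    and dga_scale: "a \<in> Agr m \<Longrightarrow> of_k c * a \<in> Agr m"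
    and dga_uniq: "\<forall>N f. (\<forall>i<N. f i \<in> Agr i) \<and> (\<Sum>i<N. f i) = 0 \<longrightarrow> (\<forall>i<N. f i = 0)"
    and dga_mul: "a \<in> Agr i \<Longrightarrow> b \<in> Agr j \<Longrightarrow> a * b \<in> Agr (i + j)"
    and dga_0: "Agr 0 = range of_k"
    and dga_dadd: "d (a + b) = d a + d b"
    and dga_ddeg: "a \<in> Agr i \<Longrightarrow> d a \<in> Agr (i + 1)"
    and dga_leib: "a \<in> Agr i \<Longrightarrow> d (a * b) = d a * b + (- 1) ^ i * a * d b"
proof -
  note H = assms[unfolded connected_cochain_dga_def]
  note c1 = H[THEN conjunct1]
  note c3 = H[THEN conjunct2, THEN conjunct2, THEN conjunct1]
  note c4 = H[THEN conjunct2, THEN conjunct2, THEN conjunct2, THEN conjunct1]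
  note c6 = H[THEN conjunct2, THEN conjunct2, THEN conjunct2, THEN conjunct2, THEN conjunct2, THEN conjunct1]
  note c7 = H[THEN conjunct2, THEN conjunct2, THEN conjunct2, THEN conjunct2, THEN conjunct2, THEN conjunct2, THEN conjunct1]
  note c9 = H[THEN conjunct2, THEN conjunct2, THEN conjunct2, THEN conjunct2, THEN conjunct2, THEN conjunct2, THEN conjunct2, THEN conjunct2, THEN conjunct1]
  note c11 = H[THEN conjunct2, THEN conjunct2, THEN conjunct2, THEN conjunct2, THEN conjunct2, THEN conjunct2, THEN conjunct2, THEN conjunct2, THEN conjunct2, THEN conjunct2]
  show "0 \<in> Agr m" using c1 by blast
  show "a \<in> Agr m \<Longrightarrow> b \<in> Agr m \<Longrightarrow> a + b \<in> Agr m" using c1 by blast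
  show "a \<in> Agr m \<Longrightarrow> of_k c * a \<in> Agr m" using c1 by blast
  show "\<forall>N f. (\<forall>i<N. f i \<in> Agr i) \<and> (\<Sum>i<N. f i) = 0 \<longrightarrow> (\<forall>i<N. f i = 0)" by (rule c3)
  show "a \<in> Agr i \<Longrightarrow> b \<in> Agr j \<Longrightarrow> a * b \<in> Agr (i + j)" using c4 by blast
  show "Agr 0 = range of_k" by (rule c6)
  show "d (a + b) = d a + d b" using c7 by blast
  show "a \<in> Agr i \<Longrightarrow> d a \<in> Agr (i + 1)" using c9 by blast
  show "a \<in> Agr i \<Longrightarrow> d (a * b) = d a * b + (- 1) ^ i * a * d b" using c11 by blast
qed

context ncp begin

lemma deg2_decomp:
  assumes dga: "connected_cochain_dga of_k Agr d" and deg1: "\<forall>i<n. x i \<in> Agr 1"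
    and p: "nc_poly n p" and y: "nc_eval of_k x p = y" and yA: "y \<in> Agr 2"
  shows "y = (\<Sum>a<n. \<Sum>b<n. of_k (p [a,b]) * (x a * x b))"
proof -
  have A0: "0 \<in> Agr m" for m by (rule dga_zero[OF dga])
  have Aadd: "a + b \<in> Agr m" if "a \<in> Agr m" "b \<in> Agr m" for a b m
    by (rule dga_add[OF dga that])
  have Ascale: "of_k c * a \<in> Agr m" if "a \<in> Agr m" for a c m
    by (rule dga_scale[OF dga that])
  have Amul: "a * b \<in> Agr (i + j)" if "a \<in> Agr i" "b \<in> Agr j" for a b i j
    by (rule dga_mul[OF dga that])
  have Agr0: "Agr 0 = range of_k" by (rule dga_0[OF dga])
  have U: "\<forall>N f. (\<forall>i<N. f i \<in> Agr i) \<and> (\<Sum>i<N. f i) = 0 \<longrightarrow> (\<forall>i<N. f i = 0)"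
    by (rule dga_uniq[OF dga])
  have Aneg: "- a \<in> Agr m" if "a \<in> Agr m" for a m
  proof -
    have "of_k (- 1) * a \<in> Agr m" by (rule Ascale[OF that])
    then show ?thesis by (simp add: ofk_minus ofk_1)
  qed
  have Asum: "finite I \<Longrightarrow> (\<And>i. i \<in> I \<Longrightarrow> g i \<in> Agr m) \<Longrightarrow> sum g I \<in> Agr m" for I g m
  proof (induction rule: finite_induct)
    case empty then show ?case by (simp add: A0)
  next
    case (insert i I) then show ?case by (simp add: Aadd)
  qed
  have XA: "set w \<subseteq> {..<n} \<Longrightarrow> prod_list (map x w) \<in> Agr (length w)" for w
  proof (induction w)
    case Nil
    have "(1::'a) = of_k 1" by (simp add: ofk_1)
    then show ?case using Agr0 by simp
  next
    case (Cons a w)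
    then have "x a \<in> Agr 1" "prod_list (map x w) \<in> Agr (length w)" using deg1 by auto
    then have "x a * prod_list (map x w) \<in> Agr (1 + length w)" by (rule Amul)
    then show ?case by simp
  qed
  define S where "S = {w. p w \<noteq> 0}"
  have fS: "finite S" using p by (simp add: S_def nc_poly_def)
  have sS: "set w \<subseteq> {..<n}" if "w \<in> S" for w using p that by (simp add: S_def nc_poly_def)
  define N where "N = Suc (Max (insert 2 (length ` S)))"
  have fL: "finite (insert 2 (length ` S))" using fS by simp
  have lenN: "length w < N" if "w \<in> S" for w
  proof -
    have "length w \<le> Max (insert 2 (length ` S))" by (rule Max_ge[OF fL]) (use that in auto)
    then show ?thesis by (simp add: N_def)
  qed
  have twoN: "2 < N"
  proof -
    have "2 \<le> Max (insert 2 (length ` S))" by (rule Max_ge[OF fL]) auto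
    then show ?thesis by (simp add: N_def)
  qed
  define f where "f m = (\<Sum>w\<in>{w. w \<in> S \<and> length w = m}. of_k (p w) * prod_list (map x w))" for m
  have fA: "f m \<in> Agr m" for m
    unfolding f_def
  proof (rule Asum)
    show "finite {w. w \<in> S \<and> length w = m}" using fS by simp
  next
    fix w assume "w \<in> {w. w \<in> S \<and> length w = m}"
    then have "w \<in> S" "length w = m" by auto
    then show "of_k (p w) * prod_list (map x w) \<in> Agr m" using XA[OF sS] Ascale by metis
  qed
  have ysum: "y = (\<Sum>m<N. f m)"
  proof -
    have "y = (\<Sum>w\<in>S. of_k (p w) * prod_list (map x w))" using y by (simp add: nc_eval_def S_def)
    also have "\<dots> = (\<Sum>m<N. f m)" unfolding f_def
      by (rule sum.group[symmetric, OF fS finite_lessThan]) (use lenN in auto)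
    finally show ?thesis .
  qed
  define g where "g m = (if m = 2 then f m - y else f m)" for m
  have gA: "\<forall>m<N. g m \<in> Agr m"
  proof (intro allI impI)
    fix m assume "m < N"
    show "g m \<in> Agr m"
    proof (cases "m = 2")
      case True
      have "f 2 + - y \<in> Agr 2" by (rule Aadd[OF fA Aneg[OF yA]])
      then show ?thesis using True by (simp add: g_def)
    next
      case False then show ?thesis by (simp add: g_def fA)
    qed
  qed
  have "g m = f m - (if m = 2 then y else 0)" for m by (simp add: g_def)
  then have "(\<Sum>m<N. g m) = (\<Sum>m<N. f m) - (\<Sum>m<N. if m = 2 then y else 0)"
    by (simp add: sum_subtractf)
  also have "\<dots> = 0" using twoN ysum by simp
  finally have "(\<Sum>m<N. g m) = 0" .
  then have "\<forall>m<N. g m = 0" using U gA by blast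
  then have "g 2 = 0" using twoN by blast
  then have f2: "f 2 = y" by (simp add: g_def)
  define W where "W = (\<lambda>(a,b). [a,b]) ` ({..<n} \<times> {..<n})"
  have fW: "finite W" by (simp add: W_def)
  have sub: "{w. w \<in> S \<and> length w = 2} \<subseteq> W"
  proof
    fix w assume "w \<in> {w. w \<in> S \<and> length w = 2}"
    then have w: "w \<in> S" "length w = 2" by auto
    obtain a b where ab: "w = [a,b]" using w(2)
      by (metis (no_types) length_0_conv length_Suc_conv numeral_2_eq_2)
    have "a < n" "b < n" using sS[OF w(1)] ab by auto
    then show "w \<in> W" unfolding W_def ab by auto
  qed
  have "f 2 = (\<Sum>w\<in>W. of_k (p w) * prod_list (map x w))"
    unfolding f_def
  proof (rule sum.mono_neutral_left[OF fW sub])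
    show "\<forall>w\<in>W - {w. w \<in> S \<and> length w = 2}. of_k (p w) * prod_list (map x w) = 0"
    proof
      fix w assume "w \<in> W - {w. w \<in> S \<and> length w = 2}"
      then have "w \<notin> S" by (auto simp: W_def)
      then show "of_k (p w) * prod_list (map x w) = 0" by (simp add: S_def ofk_0)
    qed
  qed
  also have "\<dots> = (\<Sum>(a,b)\<in>{..<n} \<times> {..<n}. of_k (p [a,b]) * prod_list (map x [a,b]))"
    unfolding W_def by (subst sum.reindex) (auto simp: inj_on_def case_prod_beta intro!: sum.cong)
  also have "\<dots> = (\<Sum>a<n. \<Sum>b<n. of_k (p [a,b]) * (x a * x b))"
    by (auto simp: sum.cartesian_product intro!: sum.cong)
  finally show ?thesis using f2 by simp
qed

end

theorem theorem2p1:
  fixes of_k :: "'k::field_char_0 \<Rightarrow> 'a::ring_1"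
    and Agr :: "nat \<Rightarrow> 'a set"
    and d :: "'a \<Rightarrow> 'a"
    and x :: "nat \<Rightarrow> 'a"
    and n :: nat
  assumes alg_closed: "\<forall>p :: 'k poly. degree p \<ge> 1 \<longrightarrow> (\<exists>z. poly p z = 0)"
    and n2: "n \<ge> 2"
    and kalg: "k_algebra of_k"
    and dga: "connected_cochain_dga of_k Agr d"
    and deg1: "\<forall>i<n. x i \<in> Agr 1"
    and pres: "presents_anticomm n of_k x"
  shows "\<exists>M :: nat \<Rightarrow> nat \<Rightarrow> 'k. \<forall>i<n. d (x i) = (\<Sum>j<n. of_k (M i j) * (x j * x j))"
proof -
  interpret L: ncp of_k x n by (rule ncp.intro[OF kalg pres])
  have two: "(2::'k) \<noteq> 0" by simp
  have dadd: "d (a + b) = d a + d b" for a b by (rule dga_dadd[OF dga])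
  have ddeg: "a \<in> Agr i \<Longrightarrow> d a \<in> Agr (i + 1)" for a i by (rule dga_ddeg[OF dga])
  have leib: "a \<in> Agr i \<Longrightarrow> d (a * b) = d a * b + (- 1) ^ i * a * d b" for a b i
    by (rule dga_leib[OF dga])
  have d0: "d 0 = 0" using dadd[of 0 0] by simp
  have D: "\<exists>P. d (x i) = (\<Sum>a<n. \<Sum>b<n. of_k (P a b) * (x a * x b))" if "i < n" for i
  proof -
    obtain p where p: "nc_poly n p" "nc_eval of_k x p = d (x i)" using L.surj_eval by blast
    have "d (x i) \<in> Agr (1 + 1)" using ddeg deg1 that by blast
    moreover have "(1::nat) + 1 = 2" by simp
    ultimately have "d (x i) \<in> Agr 2" by metis
    then have "d (x i) = (\<Sum>a<n. \<Sum>b<n. of_k (p [a,b]) * (x a * x b))"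
      by (rule L.deg2_decomp[OF dga deg1 p])
    then show ?thesis by (intro exI[where x="\<lambda>a b. p [a,b]"])
  qed
  have "\<exists>P. \<forall>i. i < n \<longrightarrow> d (x i) = (\<Sum>a<n. \<Sum>b<n. of_k (P i a b) * (x a * x b))"
    by (rule choice) (use D in blast)
  then obtain P where P: "\<And>i. i < n \<Longrightarrow> d (x i) = (\<Sum>a<n. \<Sum>b<n. of_k (P i a b) * (x a * x b))"
    by blast
  have Id: "d (x i) * x j - x i * d (x j) + (d (x j) * x i - x j * d (x i)) = 0"
    if "i < n" "j < n" "i \<noteq> j" for i j
  proof -
    have "x i * x j + x j * x i = 0" by (rule L.anticomm'[OF that])
    then have "d (x i * x j) + d (x j * x i) = 0" using d0 dadd by metis
    moreover have "d (x i * x j) = d (x i) * x j - x i * d (x j)"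
      using leib[of "x i" 1 "x j"] deg1 that by simp
    moreover have "d (x j * x i) = d (x j) * x i - x j * d (x i)"
      using leib[of "x j" 1 "x i"] deg1 that by simp
    ultimately show ?thesis by simp
  qed
  have sym: "P i t j = P i j t" if "i < n" "j < n" "t < n" "i \<noteq> j" "t \<noteq> j" for i j t
  proof -
    have "L.psi j t (d (x i) * x j - x i * d (x j) + (d (x j) * x i - x j * d (x i))) = 0"
      by (simp only: Id[OF that(1,2,4)] L.psi_zero)
    then have "L.psi j t (d (x i) * x j) - L.psi j t (x i * d (x j)) + (L.psi j t (d (x j) * x i) - L.psi j t (x j * d (x i))) = 0"
      by (simp only: L.psi_add L.psi_diff)
    then have "(\<Sum>a<n. \<Sum>b<n. P i a b * phi j t (mono_nc [a,b,j])) - (\<Sum>a<n. \<Sum>b<n. P j a b * phi j t (mono_nc [i,a,b]))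
       + ((\<Sum>a<n. \<Sum>b<n. P j a b * phi j t (mono_nc [a,b,i])) - (\<Sum>a<n. \<Sum>b<n. P i a b * phi j t (mono_nc [j,a,b]))) = 0"
      by (simp only: P[OF that(1)] P[OF that(2)] L.psi_right[OF that(1)] L.psi_right[OF that(2)]
          L.psi_left[OF that(1)] L.psi_left[OF that(2)])
    then have "(\<Sum>a<n. \<Sum>b<n. P i a b * phi j t (mono_nc [a,b,j])) - (\<Sum>a<n. \<Sum>b<n. P i a b * phi j t (mono_nc [j,a,b])) = 0"
      using E2[OF that(4), where Q="P j" and n=n and t=t] by simp
    then have "2 * P i t j - 2 * P i j t = 0"
      using E1[where s=j and t=t and n=n and Q="P i"] that by simp
    then show ?thesis using two by simp
  qed
  have symm: "P i a b = P i b a" if "i < n" "a < n" "b < n" "a \<noteq> b" for i a b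
  proof (cases "b = i")
    case False
    then show ?thesis using sym[of i b a] that by auto
  next
    case True
    then have "a \<noteq> i" using that by simp
    then show ?thesis using sym[of i a b] that by auto
  qed
  show ?thesis
  proof (intro exI allI impI)
    fix i assume i: "i < n"
    have "d (x i) = (\<Sum>a<n. \<Sum>b<n. of_k (P i a b) * (x a * x b))" by (rule P[OF i])
    also have "\<dots> = (\<Sum>a<n. of_k (P i a a) * (x a * x a))"
      by (rule L.offdiag[OF two]) (use symm i in auto)
    finally show "d (x i) = (\<Sum>j<n. of_k (P i j j) * (x j * x j))" .
  qed
qed

end
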